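(* Let $(H,h)$ be an equivariant pair with $h(\infty)=\infty$, regarded as a homeomorphism $h:\mathbb{C}\to\mathbb{C}$. For $X\subset\mathbb{C}$ let $\alpha(X)$ be the supremum of $\sum_i\mathrm{area}(D_i)$ over all finite collections $\{D_i\}$ of pairwise disjoint disks contained in $X$, and for each closed interval $J\subset[0,1]$ let $A(J)=\alpha(h([0,1]\times J))$. Suppose $y\in(0,1)$ is a stiff point for $A$, i.e. there is some $N$ such that no closed interval $J\subset[0,1]$ centered at $y$ satisfies $A(J)\ge N|J|$. Then for every real linear projection $\pi:\mathbb{C}\to\mathbb{R}$, the function $t\mapsto\pi(h(t,y))$, $t\in[0,1]$, is absolutely continuous.
   Context: $\mathbb{H}^3$ is the upper half space model $\mathbb{C}\times(0,\infty)$ of hyperbolic $3$-space with ideal boundary $S=\mathbb{C}\cup\{\infty\}$; $\mathcal{I}$ is its isometry group, acting also on $S$ by conformal transformations. A nice lattice is a subgroup $\Gamma\subset\mathcal{I}$ acting freely, properly discontinuously and cocompactly on $\mathbb{H}^3$. An equivariant pair $(H,h)$ consists of a bi-Lipschitz bijection $H:\mathbb{H}^3\to\mathbb{H}^3$ and a homeomorphism $h:S\to S$ such that $H\cup h$ is continuous on $\mathbb{H}^3\cup S$, with nice lattices $\Gamma_1,\Gamma_2$ satisfying $H\Gamma_1H^{-1}=\Gamma_2$, $h\Gamma_1h^{-1}=\Gamma_2$. Points of $\mathbb{C}$ are written $(x,y)=x+iy$; $|J|$ is the length of $J$. *)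

theory Defs
  imports "HOL-Analysis.Analysis"
begin

text \<open>Points of H^3 are pairs (z,t) with z complex and t > 0.
  Points of the ideal boundary S are elements of complex option, None being infinity.\<close>

definition H3 :: "(complex \<times> real) set" where
  "H3 = {(z, t). t > 0}"

definition hdist :: "complex \<times> real \<Rightarrow> complex \<times> real \<Rightarrow> real" where
  "hdist p q = arcosh (1 + ((cmod (fst p - fst q))\<^sup>2 + (snd p - snd q)\<^sup>2) / (2 * snd p * snd q))"

text \<open>Inverse stereographic projection of R^3 \<union> {\<infinity>} onto the unit sphere of R^4;
  it induces the topology of the compactification H^3 \<union> S.\<close>

definition stereo :: "complex \<times> real \<Rightarrow> complex \<times> real \<times> real" where
  "stereo p = (let n = (cmod (fst p))\<^sup>2 + (snd p)\<^sup>2 in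
     (of_real (2 / (1 + n)) * fst p, 2 * snd p / (1 + n), (n - 1) / (n + 1)))"

definition embS :: "complex option \<Rightarrow> complex \<times> real \<times> real" where
  "embS \<xi> = (case \<xi> of None \<Rightarrow> (0, 0, 1) | Some z \<Rightarrow> stereo (z, 0))"

type_synonym clpt = "(complex \<times> real) + complex option"

definition Cl :: "clpt set" where
  "Cl = Inl ` H3 \<union> range Inr"

definition emb :: "clpt \<Rightarrow> complex \<times> real \<times> real" where
  "emb x = (case x of Inl p \<Rightarrow> stereo p | Inr \<xi> \<Rightarrow> embS \<xi>)"

definition pairmap :: "(complex \<times> real \<Rightarrow> complex \<times> real) \<Rightarrow> (complex option \<Rightarrow> complex option) \<Rightarrow> clpt \<Rightarrow> clpt" where
  "pairmap F f x = (case x of Inl p \<Rightarrow> Inl (F p) | Inr \<xi> \<Rightarrow> Inr (f \<xi>))"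

text \<open>Continuity of F \<union> f on H^3 \<union> S (sequential continuity in a metrizable space).\<close>
definition cont_closure :: "(complex \<times> real \<Rightarrow> complex \<times> real) \<Rightarrow> (complex option \<Rightarrow> complex option) \<Rightarrow> bool" where
  "cont_closure F f \<longleftrightarrow>
     (\<forall>x\<in>Cl. \<forall>\<sigma>. (\<forall>n. \<sigma> n \<in> Cl) \<longrightarrow> (\<lambda>n. emb (\<sigma> n)) \<longlonglongrightarrow> emb x
        \<longrightarrow> (\<lambda>n. emb (pairmap F f (\<sigma> n))) \<longlonglongrightarrow> emb (pairmap F f x))"

definition contS :: "(complex option \<Rightarrow> complex option) \<Rightarrow> bool" where
  "contS f \<longleftrightarrow> (\<forall>\<xi> \<sigma>. (\<lambda>n. embS (\<sigma> n)) \<longlonglongrightarrow> embS \<xi> \<longrightarrow> (\<lambda>n. embS (f (\<sigma> n))) \<longlonglongrightarrow> embS (f \<xi>))"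

definition homeoS :: "(complex option \<Rightarrow> complex option) \<Rightarrow> bool" where
  "homeoS f \<longleftrightarrow> bij f \<and> contS f \<and> contS (inv f)"

text \<open>An element of the isometry group is a pair (g, gS): g an isometry of H^3
  (extended by the identity outside H^3, so that it is uniquely determined), and gS its
  (unique) continuous extension to the ideal boundary.\<close>

definition isom_grp :: "((complex \<times> real \<Rightarrow> complex \<times> real) \<times> (complex option \<Rightarrow> complex option)) set" where
  "isom_grp = {(g, gS). bij_betw g H3 H3 \<and> (\<forall>p\<in>H3. \<forall>q\<in>H3. hdist (g p) (g q) = hdist p q)
      \<and> (\<forall>p. p \<notin> H3 \<longrightarrow> g p = p) \<and> bij gS \<and> cont_closure g gS}"

definition compose_pair where
  "compose_pair a b = (fst a \<circ> fst b, snd a \<circ> snd b)"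

definition nice_lattice :: "((complex \<times> real \<Rightarrow> complex \<times> real) \<times> (complex option \<Rightarrow> complex option)) set \<Rightarrow> bool" where
  "nice_lattice \<Gamma> \<longleftrightarrow>
     \<Gamma> \<subseteq> isom_grp \<and>
     (id, id) \<in> \<Gamma> \<and>
     (\<forall>a\<in>\<Gamma>. \<forall>b\<in>\<Gamma>. compose_pair a b \<in> \<Gamma>) \<and>
     (\<forall>a\<in>\<Gamma>. \<exists>b\<in>\<Gamma>. compose_pair a b = (id, id)) \<and>
     \<comment> \<open>acts freely on H^3\<close>
     (\<forall>\<gamma>\<in>\<Gamma>. \<gamma> \<noteq> (id, id) \<longrightarrow> (\<forall>p\<in>H3. fst \<gamma> p \<noteq> p)) \<and>
     \<comment> \<open>properly discontinuously\<close>
     (\<forall>K. compact K \<and> K \<subseteq> H3 \<longrightarrow> finite {\<gamma>\<in>\<Gamma>. fst \<gamma> ` K \<inter> K \<noteq> {}}) \<and>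
     \<comment> \<open>cocompactly\<close>
     (\<exists>K. compact K \<and> K \<subseteq> H3 \<and> (\<Union>\<gamma>\<in>\<Gamma>. fst \<gamma> ` K) = H3)"

definition bilipschitz_H3 :: "(complex \<times> real \<Rightarrow> complex \<times> real) \<Rightarrow> bool" where
  "bilipschitz_H3 H \<longleftrightarrow> bij_betw H H3 H3 \<and>
     (\<exists>L\<ge>1. \<forall>p\<in>H3. \<forall>q\<in>H3. hdist p q / L \<le> hdist (H p) (H q) \<and> hdist (H p) (H q) \<le> L * hdist p q)"

definition conj_rel where
  "conj_rel H h \<gamma> \<gamma>' \<longleftrightarrow> (\<forall>p\<in>H3. H (fst \<gamma> p) = fst \<gamma>' (H p)) \<and> (\<forall>\<xi>. h (snd \<gamma> \<xi>) = snd \<gamma>' (h \<xi>))"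

definition equivariant_pair :: "(complex \<times> real \<Rightarrow> complex \<times> real) \<Rightarrow> (complex option \<Rightarrow> complex option) \<Rightarrow> bool" where
  "equivariant_pair H h \<longleftrightarrow> bilipschitz_H3 H \<and> homeoS h \<and> cont_closure H h \<and>
     (\<exists>\<Gamma>1 \<Gamma>2. nice_lattice \<Gamma>1 \<and> nice_lattice \<Gamma>2 \<and>
        (\<forall>\<gamma>\<in>\<Gamma>1. \<exists>\<gamma>'\<in>\<Gamma>2. conj_rel H h \<gamma> \<gamma>') \<and>
        (\<forall>\<gamma>'\<in>\<Gamma>2. \<exists>\<gamma>\<in>\<Gamma>1. conj_rel H h \<gamma> \<gamma>'))"

definition disk_alpha :: "complex set \<Rightarrow> real" where
  "disk_alpha X = Sup {(\<Sum>i<n. pi * (r i)\<^sup>2) | (n::nat) c r.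
       (\<forall>i<n. r i > 0 \<and> ball (c i) (r i) \<subseteq> X) \<and>
       (\<forall>i<n. \<forall>j<n. i \<noteq> j \<longrightarrow> ball (c i) (r i) \<inter> ball (c j) (r j) = {})}"

definition rect :: "real set \<Rightarrow> complex set" where
  "rect J = {Complex x y | x y. x \<in> {0..1} \<and> y \<in> J}"

definition stiff_point :: "(real set \<Rightarrow> real) \<Rightarrow> real \<Rightarrow> bool" where
  "stiff_point A y \<longleftrightarrow> (\<exists>N::real. \<not> (\<exists>a b. 0 \<le> a \<and> a < b \<and> b \<le> 1 \<and> (a + b) / 2 = y
        \<and> A {a..b} \<ge> N * (b - a)))"

definition abs_cont_on :: "real \<Rightarrow> real \<Rightarrow> (real \<Rightarrow> real) \<Rightarrow> bool" where
  "abs_cont_on a b f \<longleftrightarrow> (\<forall>\<epsilon>>0. \<exists>\<delta>>0. \<forall>n (u::nat\<Rightarrow>real) v.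
      (\<forall>i<n. a \<le> u i \<and> u i \<le> v i \<and> v i \<le> b) \<and>
      (\<forall>i<n. \<forall>j<n. i \<noteq> j \<longrightarrow> v i \<le> u j \<or> v j \<le> u i) \<and>
      (\<Sum>i<n. v i - u i) < \<delta> \<longrightarrow> (\<Sum>i<n. \<bar>f (v i) - f (u i)\<bar>) < \<epsilon>)"

end

theory Submission
  imports Defs "HOL-Real_Asymp.Real_Asymp"
begin

definition DD :: "complex \<times> real \<times> real \<Rightarrow> complex \<times> real \<times> real \<Rightarrow> real" where
  "DD X Y = (norm (X - Y))\<^sup>2"

lemma DD_pair: "DD (a,b,c) (a',b',c') = (cmod (a - a'))\<^sup>2 + (b-b')\<^sup>2 + (c-c')\<^sup>2"
  by (simp add: DD_def norm_Pair)

lemma cmod_lin: "(cmod (of_real a * z - of_real b * w))\<^sup>2 = a\<^sup>2 * (cmod z)\<^sup>2 + b\<^sup>2 * (cmod w)\<^sup>2 - 2*a*b*Re (z * cnj w)"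
  unfolding cmod_power2 by (simp add: power2_eq_square algebra_simps)

lemma cmod_diff2: "(cmod (z - w))\<^sup>2 = (cmod z)\<^sup>2 + (cmod w)\<^sup>2 - 2*Re (z * cnj w)"
  using cmod_lin[of 1 z 1 w] by simp

lemma alg1:
  fixes Z W P t s n m :: real
  assumes "Z \<ge> 0" "W \<ge> 0" "n = Z + t\<^sup>2" "m = W + s\<^sup>2"
  shows "(2/(1+n))\<^sup>2 * Z + (2/(1+m))\<^sup>2 * W - 2*(2/(1+n))*(2/(1+m))*P
     + (2*t/(1+n) - 2* s/(1+m))\<^sup>2 + ((n-1)/(n+1) - (m-1)/(m+1))\<^sup>2
   = 4*((Z + W - 2*P) + (t-s)\<^sup>2)/((1+n)*(1+m))"
proof -
  define a where "a = 1 + n"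
  define b where "b = 1 + m"
  have a: "a \<noteq> 0" "b \<noteq> 0" unfolding a_def b_def using assms zero_le_power2[of t] zero_le_power2[of s] by linarith+
  have Z: "Z = a - 1 - t\<^sup>2" and W: "W = b - 1 - s\<^sup>2" and n: "n = a - 1" and m: "m = b - 1" using assms a_def b_def by auto
  show ?thesis unfolding Z W n m using a by (simp add: field_simps power_divide) algebra
qed

lemma stereo_DD:
  "DD (stereo (z,t)) (stereo (w,s)) = 4*((cmod (z-w))\<^sup>2 + (t-s)\<^sup>2)/((1+((cmod z)\<^sup>2+t\<^sup>2))*(1+((cmod w)\<^sup>2+s\<^sup>2)))"
  unfolding stereo_def Let_def fst_conv snd_conv DD_pair cmod_lin
  using alg1[of "(cmod z)\<^sup>2" "(cmod w)\<^sup>2" "(cmod z)\<^sup>2 + t\<^sup>2" t "(cmod w)\<^sup>2 + s\<^sup>2" s "Re (z * cnj w)"] cmod_diff2[of z w]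
  by (simp add: add.commute)

definition Dl :: "complex \<times> real \<Rightarrow> complex \<times> real \<Rightarrow> real" where
  "Dl p q = (cmod (fst p - fst q))\<^sup>2 + (snd p - snd q)\<^sup>2"

definition Jf :: "complex \<times> real \<times> real \<Rightarrow> complex \<times> real \<times> real \<Rightarrow> complex \<times> real \<times> real \<Rightarrow> real" where
  "Jf Q X Y = (fst (snd Q))\<^sup>2 * DD X Y / (DD X Q * DD Y Q)"

lemma nn_pos: "(1::real) + ((cmod z)\<^sup>2 + t\<^sup>2) > 0"
  using zero_le_power2[of t] zero_le_power2[of "cmod z"] by linarith

lemma stereo_DD': "DD (stereo (z,t)) (stereo (w,s)) = 4 * Dl (z,t) (w,s) / ((1+((cmod z)\<^sup>2+t\<^sup>2))*(1+((cmod w)\<^sup>2+s\<^sup>2)))"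
  by (simp add: stereo_DD Dl_def)

lemma stereo_snd: "fst (snd (stereo (c,r))) = 2*r/(1+((cmod c)\<^sup>2+r\<^sup>2))"
  by (simp add: stereo_def Let_def)

lemma DD_stereo_N: "DD (stereo (z,t)) (0,0,1) = 4/(1+((cmod z)\<^sup>2+t\<^sup>2))"
proof -
  define n where "n = (cmod z)\<^sup>2+t\<^sup>2"
  have a: "1 + n > 0" "n + 1 > 0" using nn_pos[of z t] n_def by auto
  have "DD (stereo (z,t)) (0,0,1) = (2/(1+n))\<^sup>2 * (cmod z)\<^sup>2 + (2*t/(1+n))\<^sup>2 + ((n-1)/(n+1) - 1)\<^sup>2"
  proof -
    have "stereo (z,t) = (of_real (2/(1+n)) * z, 2*t/(1+n), (n-1)/(n+1))" by (simp add: stereo_def Let_def n_def)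
    moreover have "cmod (of_real (2/(1+n)) * z - 0) = 2/(1+n) * cmod z" using a by (simp only: diff_zero norm_mult norm_of_real) simp
    ultimately show ?thesis by (simp only: DD_pair) (simp add: power_mult_distrib power_divide)
  qed
  also have "\<dots> = 4/(1+n)"
  proof -
    have cz: "(cmod z)\<^sup>2 = n - t\<^sup>2" "n + 1 = 1 + n" using n_def by auto
    show ?thesis unfolding cz using a by (simp add: field_simps power_divide) algebra
  qed
  finally show ?thesis by (simp add: n_def)
qed

lemma Dl_nonneg: "Dl p q \<ge> 0" by (simp add: Dl_def)
lemma Dl_sym: "Dl p q = Dl q p" by (simp add: Dl_def norm_minus_commute power2_commute)

lemma J_stereo: "Jf (stereo (c,r)) (stereo (z,t)) (stereo (w,s)) = r\<^sup>2 * Dl (z,t) (w,s) / (Dl (z,t) (c,r) * Dl (w,s) (c,r))"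
proof -
  define a where "a = 1+((cmod z)\<^sup>2+t\<^sup>2)"
  define b where "b = 1+((cmod w)\<^sup>2+s\<^sup>2)"
  define e where "e = 1+((cmod c)\<^sup>2+r\<^sup>2)"
  have p: "a > 0" "b > 0" "e > 0" unfolding a_def b_def e_def by (rule nn_pos)+
  show ?thesis
    unfolding Jf_def stereo_snd stereo_DD'
    unfolding a_def[symmetric] b_def[symmetric] e_def[symmetric]
    using p
    by (cases "Dl (z,t) (c,r) = 0"; cases "Dl (w,s) (c,r) = 0") (simp_all add: field_simps power2_eq_square)
qed

lemma J_stereo_N: "Jf (stereo (c,r)) (stereo (z,t)) (0,0,1) = r\<^sup>2 / Dl (z,t) (c,r)"
proof -
  define a where "a = 1+((cmod z)\<^sup>2+t\<^sup>2)"
  define e where "e = 1+((cmod c)\<^sup>2+r\<^sup>2)"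
  have p: "a > 0" "e > 0" unfolding a_def e_def by (rule nn_pos)+
  have q: "DD (0,0,1) (stereo (c,r)) = 4/e" using DD_stereo_N[of c r] e_def by (simp add: DD_def norm_minus_commute)
  show ?thesis
    unfolding Jf_def stereo_snd stereo_DD' DD_stereo_N q
    unfolding a_def[symmetric] e_def[symmetric]
    using p
    by (cases "Dl (z,t) (c,r) = 0") (simp_all add: field_simps power2_eq_square)
qed

definition Del :: "complex \<times> real \<Rightarrow> complex \<times> real \<Rightarrow> real" where
  "Del p q = Dl p q / (2 * snd p * snd q)"

lemma Del_nonneg: "p \<in> H3 \<Longrightarrow> q \<in> H3 \<Longrightarrow> Del p q \<ge> 0"
  by (auto simp: Del_def H3_def Dl_nonneg)

lemma hdist_Del: "hdist p q = arcosh (1 + Del p q)"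
  by (simp add: hdist_def Del_def Dl_def)

lemma isom_H3: "(g,gS) \<in> isom_grp \<Longrightarrow> p \<in> H3 \<Longrightarrow> g p \<in> H3"
  by (auto simp: isom_grp_def bij_betw_def)

lemma Del_inv: assumes "(g,gS) \<in> isom_grp" "p \<in> H3" "q \<in> H3"
  shows "Del (g p) (g q) = Del p q"
proof -
  have "hdist (g p) (g q) = hdist p q" using assms by (auto simp: isom_grp_def)
  then have "cosh (arcosh (1 + Del (g p) (g q))) = cosh (arcosh (1 + Del p q))" by (simp add: hdist_Del)
  moreover have "Del (g p) (g q) \<ge> 0" "Del p q \<ge> 0" using assms isom_H3 Del_nonneg by blast+
  ultimately show ?thesis by simp
qed

lemma J_H3: assumes "P \<in> H3" "p \<in> H3" "q \<in> H3"
  shows "Jf (stereo P) (stereo p) (stereo q) = Del p q / (2 * Del P p * Del P q)"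
proof -
  obtain c r where P: "P = (c,r)" by fastforce
  obtain z t where p: "p = (z,t)" by fastforce
  obtain w s where q: "q = (w,s)" by fastforce
  have pos: "r > 0" "t > 0" "s > 0" using assms P p q by (auto simp: H3_def)
  have s1: "Dl (c,r) (z,t) = Dl (z,t) (c,r)" "Dl (c,r) (w,s) = Dl (w,s) (c,r)" by (rule Dl_sym)+
  show ?thesis unfolding P p q J_stereo Del_def fst_conv snd_conv s1 using pos
    by (cases "Dl (z,t) (c,r) = 0"; cases "Dl (w,s) (c,r) = 0") (simp_all add: field_simps power2_eq_square)
qed

lemma J_inv_H3: assumes "(g,gS) \<in> isom_grp" "P \<in> H3" "p \<in> H3" "q \<in> H3"
  shows "Jf (stereo (g P)) (stereo (g p)) (stereo (g q)) = Jf (stereo P) (stereo p) (stereo q)"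
  using assms by (simp add: J_H3 isom_H3 Del_inv)

lemma isCont_stereo: "isCont stereo p"
proof -
  have "stereo = (\<lambda>p. (of_real (2 / (1 + ((cmod (fst p))\<^sup>2 + (snd p)\<^sup>2))) * fst p,
      2 * snd p / (1 + ((cmod (fst p))\<^sup>2 + (snd p)\<^sup>2)),
      (((cmod (fst p))\<^sup>2 + (snd p)\<^sup>2) - 1) / (1 + ((cmod (fst p))\<^sup>2 + (snd p)\<^sup>2))))"
    (is "_ = ?F") by (auto simp: stereo_def Let_def add.commute)
  moreover have nz: "\<And>p. 1 + ((cmod (fst p))\<^sup>2 + (snd p)\<^sup>2) \<noteq> 0"
    using nn_pos by (metis less_irrefl)
  moreover have "isCont ?F p"
    by (intro continuous_intros nz)
  ultimately show ?thesis by simp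
qed

fun bseq :: "complex option \<Rightarrow> nat \<Rightarrow> complex \<times> real" where
  "bseq (Some z) n = (z, 1 / (real n + 1))"
| "bseq None n = (0, real n + 1)"

lemma bseq_H3: "bseq a n \<in> H3"
  by (cases a) (auto simp: H3_def)

lemma bseq_lim: "(\<lambda>n. stereo (bseq a n)) \<longlonglongrightarrow> embS a"
proof (cases a)
  case None
  have e: "stereo (bseq a n) = (0, 2 * (real n + 1) / (1 + (real n + 1)\<^sup>2), ((real n + 1)\<^sup>2 - 1) / ((real n + 1)\<^sup>2 + 1))" for n
    using None by (simp add: stereo_def Let_def)
  have l1: "(\<lambda>n. 2 * (real n + 1) / (1 + (real n + 1)\<^sup>2)) \<longlonglongrightarrow> 0" by real_asymp
  have l2: "(\<lambda>n. ((real n + 1)\<^sup>2 - 1) / ((real n + 1)\<^sup>2 + 1)) \<longlonglongrightarrow> 1" by real_asymp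
  have "embS a = (0,0,1)" using None by (simp add: embS_def)
  then show ?thesis unfolding e by (simp only:) (intro tendsto_Pair tendsto_const l1 l2)
next
  case (Some z)
  have "(\<lambda>n. bseq a n) \<longlonglongrightarrow> (z, 0)"
  proof -
    have "(\<lambda>n. 1 / (real n + 1)) \<longlonglongrightarrow> 0" by real_asymp
    then show ?thesis using Some by (auto intro!: tendsto_intros)
  qed
  then have "(\<lambda>n. stereo (bseq a n)) \<longlonglongrightarrow> stereo (z,0)"
    using isCont_stereo isCont_tendsto_compose by blast
  then show ?thesis using Some by (simp add: embS_def)
qed

lemma snd_embS: "fst (snd (embS a)) = 0"
  by (cases a) (auto simp: embS_def stereo_def Let_def)

lemma snd_stereo_pos: "P \<in> H3 \<Longrightarrow> fst (snd (stereo P)) > 0"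
  using nn_pos[of "fst P" "snd P"] by (cases P) (auto simp: H3_def stereo_snd)

lemma DD_ge: "DD X Y \<ge> (fst (snd X) - fst (snd Y))\<^sup>2"
proof -
  obtain a b c where X: "X = (a,b,c)" by (cases X) auto
  obtain a' b' c' where Y: "Y = (a',b',c')" by (cases Y) auto
  show ?thesis unfolding X Y DD_pair by simp
qed

lemma DD_embS_pos: "P \<in> H3 \<Longrightarrow> DD (embS a) (stereo P) > 0"
proof -
  assume "P \<in> H3"
  then have "(fst (snd (embS a)) - fst (snd (stereo P)))\<^sup>2 > 0" using snd_stereo_pos[of P] snd_embS[of a] by simp
  then show ?thesis using DD_ge[of "embS a" "stereo P"] by linarith
qed

lemma DD_tendsto: "X \<longlonglongrightarrow> x \<Longrightarrow> Y \<longlonglongrightarrow> y \<Longrightarrow> (\<lambda>n. DD (X n) (Y n)) \<longlonglongrightarrow> DD x y"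
  unfolding DD_def by (intro tendsto_intros)

lemma Jf_tendsto: assumes "Q \<longlonglongrightarrow> q" "X \<longlonglongrightarrow> x" "Y \<longlonglongrightarrow> y" "DD x q \<noteq> 0" "DD y q \<noteq> 0"
  shows "(\<lambda>n. Jf (Q n) (X n) (Y n)) \<longlonglongrightarrow> Jf q x y"
  unfolding Jf_def using assms by (intro tendsto_intros DD_tendsto) auto

lemma stereo_tendsto: "X \<longlonglongrightarrow> x \<Longrightarrow> (\<lambda>n. stereo (X n)) \<longlonglongrightarrow> stereo x"
  using isCont_stereo isCont_tendsto_compose by blast

lemma J_inv: assumes g: "(g,gS) \<in> isom_grp" and P: "P \<in> H3"
  shows "Jf (stereo (g P)) (embS (gS a)) (embS (gS b)) = Jf (stereo P) (embS a) (embS b)"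
proof -
  have cc: "cont_closure g gS" using g by (simp add: isom_grp_def)
  have lim: "(\<lambda>n. stereo (g (bseq a n))) \<longlonglongrightarrow> embS (gS a)" for a
  proof -
    have "Inr a \<in> Cl" "\<forall>n. Inl (bseq a n) \<in> Cl" using bseq_H3 by (auto simp: Cl_def)
    moreover have "(\<lambda>n. emb (Inl (bseq a n))) \<longlonglongrightarrow> emb (Inr a)"
      using bseq_lim[of a] by (simp add: emb_def)
    ultimately have "(\<lambda>n. emb (pairmap g gS (Inl (bseq a n)))) \<longlonglongrightarrow> emb (pairmap g gS (Inr a))"
      using cc[unfolded cont_closure_def, rule_format, of "Inr a" "\<lambda>n. Inl (bseq a n)"] by blast
    then show ?thesis by (simp add: emb_def pairmap_def)
  qed
  have gP: "g P \<in> H3" using isom_H3 g P by blast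
  have 1: "(\<lambda>n. Jf (stereo (g P)) (stereo (g (bseq a n))) (stereo (g (bseq b n)))) \<longlonglongrightarrow> Jf (stereo (g P)) (embS (gS a)) (embS (gS b))"
    by (intro Jf_tendsto tendsto_const lim) (use DD_embS_pos[OF gP] in \<open>metis less_irrefl\<close>)+
  have 2: "(\<lambda>n. Jf (stereo P) (stereo (bseq a n)) (stereo (bseq b n))) \<longlonglongrightarrow> Jf (stereo P) (embS a) (embS b)"
    by (intro Jf_tendsto tendsto_const bseq_lim) (use DD_embS_pos[OF P] in \<open>metis less_irrefl\<close>)+
  have "Jf (stereo (g P)) (stereo (g (bseq a n))) (stereo (g (bseq b n))) = Jf (stereo P) (stereo (bseq a n)) (stereo (bseq b n))" for n
    using J_inv_H3[OF g P bseq_H3 bseq_H3] .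
  with 1 2 show ?thesis using LIMSEQ_unique by auto
qed

definition CR :: "complex \<times> real \<times> real \<Rightarrow> complex \<times> real \<times> real \<Rightarrow> complex \<times> real \<times> real \<Rightarrow> complex \<times> real \<times> real \<Rightarrow> real" where
  "CR A B C E = DD A B * DD C E / (DD C B * DD A E)"

lemma CR_J: assumes "DD A Q > 0" "DD B Q > 0" "DD C Q > 0" "DD E Q > 0" "fst (snd Q) \<noteq> 0"
  shows "Jf Q A B * Jf Q C E / (Jf Q C B * Jf Q A E) = CR A B C E"
  unfolding Jf_def CR_def using assms
  by (cases "DD C B = 0"; cases "DD A E = 0") (simp_all add: field_simps power2_eq_square)

lemma CR_inv: assumes g: "(g,gS) \<in> isom_grp"
  shows "CR (embS (gS a)) (embS (gS b)) (embS (gS c)) (embS (gS d)) = CR (embS a) (embS b) (embS c) (embS d)"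
proof -
  define P :: "complex \<times> real" where "P = (0,1)"
  have P: "P \<in> H3" by (simp add: P_def H3_def)
  have gP: "g P \<in> H3" using isom_H3 g P by blast
  have "CR (embS (gS a)) (embS (gS b)) (embS (gS c)) (embS (gS d)) =
     Jf (stereo (g P)) (embS (gS a)) (embS (gS b)) * Jf (stereo (g P)) (embS (gS c)) (embS (gS d)) /
     (Jf (stereo (g P)) (embS (gS c)) (embS (gS b)) * Jf (stereo (g P)) (embS (gS a)) (embS (gS d)))"
    by (rule CR_J[symmetric]) (use DD_embS_pos[OF gP] snd_stereo_pos[OF gP] in auto)
  also have "\<dots> = Jf (stereo P) (embS a) (embS b) * Jf (stereo P) (embS c) (embS d) /
     (Jf (stereo P) (embS c) (embS b) * Jf (stereo P) (embS a) (embS d))"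
    by (simp add: J_inv[OF g P])
  also have "\<dots> = CR (embS a) (embS b) (embS c) (embS d)"
    by (rule CR_J) (use DD_embS_pos[OF P] snd_stereo_pos[OF P] in auto)
  finally show ?thesis .
qed

lemma DD_sym: "DD X Y = DD Y X" by (simp add: DD_def norm_minus_commute)

lemma embS_Some: "embS (Some z) = stereo (z,0)" by (simp add: embS_def)
lemma embS_None: "embS None = (0,0,1)" by (simp add: embS_def)

lemma ratio_CR: "(cmod (z - c))\<^sup>2 / (cmod (w - c))\<^sup>2 = CR (embS (Some z)) (embS (Some c)) (embS (Some w)) (embS None)"
proof -
  define a where "a = 1+((cmod z)\<^sup>2+0\<^sup>2)"
  define b where "b = 1+((cmod c)\<^sup>2+0\<^sup>2)"
  define e where "e = 1+((cmod w)\<^sup>2+0\<^sup>2)"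
  have p: "a > 0" "b > 0" "e > 0" unfolding a_def b_def e_def by (rule nn_pos)+
  have d1: "Dl (z,0) (c,0) = (cmod (z - c))\<^sup>2" "Dl (w,0) (c,0) = (cmod (w - c))\<^sup>2" by (simp_all add: Dl_def)
  show ?thesis
    unfolding CR_def embS_Some embS_None stereo_DD' DD_stereo_N d1
    unfolding a_def[symmetric] b_def[symmetric] e_def[symmetric]
    using p
    by (cases "cmod (w - c) = 0") (simp_all add: field_simps power2_eq_square)
qed

definition unS :: "complex \<times> real \<times> real \<Rightarrow> complex option" where
  "unS X = (if snd (snd X) = 1 then None else Some (fst X / of_real (1 - snd (snd X))))"

lemma unS_embS: "unS (embS a) = a"
proof (cases a)
  case None then show ?thesis by (simp add: unS_def embS_def)
next
  case (Some z)
  define n where "n = (cmod z)\<^sup>2"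
  have n: "n \<ge> 0" "1 + n > 0" "n + 1 > 0" using n_def zero_le_power2[of "cmod z"] by linarith+
  have e: "embS a = (of_real (2/(1+n)) * z, 0, (n-1)/(n+1))" using Some by (simp add: embS_def stereo_def Let_def n_def)
  have ne: "(n-1)/(n+1) \<noteq> 1" using n by (simp add: field_simps)
  have q: "1 - (n-1)/(n+1) = 2/(1+n)" using n by (simp add: field_simps)
  have nz: "2/(1+n) \<noteq> 0" using n by simp
  have c: "\<And>x z. x \<noteq> 0 \<Longrightarrow> of_real x * z / of_real x = (z::complex)" by simp
  have "unS (embS a) = Some (of_real (2/(1+n)) * z / of_real (1 - (n-1)/(n+1)))"
    unfolding e unS_def using ne by (simp only: fst_conv snd_conv if_False)
  also have "\<dots> = Some z" by (simp only: q c[OF nz])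
  finally show ?thesis using Some by simp
qed

lemma inj_embS: "inj embS"
  by (metis injI unS_embS)

lemma norm_embS: "norm (embS a) = 1"
proof (cases a)
  case None then show ?thesis by (simp add: embS_def norm_Pair)
next
  case (Some z)
  define n where "n = (cmod z)\<^sup>2"
  have n: "n \<ge> 0" "1 + n > 0" "n + 1 > 0" using n_def zero_le_power2[of "cmod z"] by linarith+
  have e: "embS a = (of_real (2/(1+n)) * z, 0, (n-1)/(n+1))" using Some by (simp add: embS_def stereo_def Let_def n_def)
  have c: "(cmod (of_real (2/(1+n)) * z))\<^sup>2 = (2/(1+n))\<^sup>2 * n" using n
    by (simp only: norm_mult norm_of_real power_mult_distrib n_def) simp
  have "(norm (embS a))\<^sup>2 = (2/(1+n))\<^sup>2 * n + ((n-1)/(n+1))\<^sup>2"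
    unfolding e norm_Pair using c n by (simp add: power_divide)
  also have "\<dots> = (4*n + (n-1)\<^sup>2)/(1+n)\<^sup>2" by (simp add: power_divide add.commute[of n 1] add_divide_distrib)
  also have "4*n + (n-1)\<^sup>2 = (1+n)\<^sup>2" by (simp add: power2_eq_square algebra_simps)
  also have "(1+n)\<^sup>2/(1+n)\<^sup>2 = 1" using n by simp
  finally show ?thesis using norm_ge_zero[of "embS a"] by (simp add: power2_eq_1_iff)
qed

lemma range_embS: "range embS = {X. norm X = 1 \<and> fst (snd X) = 0}"
proof
  show "range embS \<subseteq> {X. norm X = 1 \<and> fst (snd X) = 0}" using norm_embS snd_embS by auto
next
  show "{X. norm X = 1 \<and> fst (snd X) = 0} \<subseteq> range embS"
  proof
    fix X :: "complex \<times> real \<times> real" assume X: "X \<in> {X. norm X = 1 \<and> fst (snd X) = 0}"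
    obtain A b x where Xe: "X = (A,b,x)" by (cases X) auto
    have b: "b = 0" and nx: "(cmod A)\<^sup>2 + x\<^sup>2 = 1" using X unfolding Xe by (auto simp: norm_Pair)
    show "X \<in> range embS"
    proof (cases "x = 1")
      case True
      then have "A = 0" using nx by simp
      then show ?thesis using True b Xe by (auto simp: embS_def intro!: range_eqI[of _ _ None])
    next
      case False
      have xx: "x * x \<le> 1" using nx zero_le_power2[of "cmod A"] unfolding power2_eq_square by linarith
      have "x \<le> 1"
      proof (rule ccontr)
        assume "\<not> x \<le> 1" then have "1 < x * x" using less_1_mult[of x x] by simp
        then show False using xx by simp
      qed
      then have x1: "x < 1" using False by simp
      define z where "z = A / of_real (1 - x)"
      define n where "n = (cmod z)\<^sup>2"
      have "cmod (of_real (1 - x)) = 1 - x" using x1 by (simp only: norm_of_real)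
      then have cz: "cmod z = cmod A / (1 - x)" by (simp only: z_def norm_divide)
      have nval: "n = (1 + x) / (1 - x)"
      proof -
        have "n = (cmod A)\<^sup>2 / (1-x)\<^sup>2" by (simp add: n_def cz power_divide)
        also have "\<dots> = (1 - x\<^sup>2)/(1-x)\<^sup>2" using nx by simp
        also have "\<dots> = ((1+x)*(1-x))/((1-x)*(1-x))" by (simp add: power2_eq_square algebra_simps)
        also have "\<dots> = (1+x)/(1-x)" using x1 by simp
        finally show ?thesis .
      qed
      have q1: "2 / (1 + n) = 1 - x" using x1 unfolding nval by (simp add: field_simps)
      have q2: "(n - 1) / (n + 1) = x" using x1 unfolding nval by (simp add: field_simps)
      have "stereo (z, 0) = (of_real (2/(1+n)) * z, 0, (n-1)/(n+1))" by (simp add: stereo_def Let_def n_def)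
      also have "\<dots> = X" unfolding q1 q2 Xe b z_def using x1 by simp
      finally show ?thesis by (metis embS_Some rangeI)
    qed
  qed
qed

lemma compact_rangeS: "compact (range embS)"
proof -
  have "range embS = sphere 0 1 \<inter> {X. fst (snd X) = 0}" unfolding range_embS by auto
  moreover have "closed {X :: complex \<times> real \<times> real. fst (snd X) = 0}"
    by (intro closed_Collect_eq continuous_intros)
  ultimately show ?thesis using compact_Int_closed compact_sphere by metis
qed

lemma DD_eq0: "DD X Y = 0 \<longleftrightarrow> X = Y" by (simp add: DD_def)

lemma Jf_same: "Jf Q X X = 0" by (simp add: Jf_def DD_def)

lemma CR_tendsto: assumes "A \<longlonglongrightarrow> a" "B \<longlonglongrightarrow> b" "C \<longlonglongrightarrow> c" "E \<longlonglongrightarrow> e" "DD c b \<noteq> 0" "DD a e \<noteq> 0"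
  shows "(\<lambda>n. CR (A n) (B n) (C n) (E n)) \<longlonglongrightarrow> CR a b c e"
  unfolding CR_def using assms by (intro tendsto_intros DD_tendsto) auto

lemma weak_QS:
  fixes h :: "complex option \<Rightarrow> complex option"
  assumes hS: "homeoS h" and hN: "h None = None"
    and G1: "\<Gamma>1 \<subseteq> isom_grp" and K0: "compact K0" "K0 \<subseteq> H3" "(\<Union>\<gamma>\<in>\<Gamma>1. fst \<gamma> ` K0) = H3"
    and conj: "\<forall>\<gamma>\<in>\<Gamma>1. \<exists>\<gamma>'\<in>isom_grp. \<forall>\<xi>. h (snd \<gamma> \<xi>) = snd \<gamma>' (h \<xi>)"
  shows "\<exists>K>0. \<forall>z c w. cmod (z - c) \<le> cmod (w - c) \<longrightarrow>
     cmod (the (h (Some z)) - the (h (Some c))) \<le> K * cmod (the (h (Some w)) - the (h (Some c)))"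
proof (rule ccontr)
  define f where "f z = the (h (Some z))" for z
  have bh: "bij h" and ch: "contS h" using hS by (auto simp: homeoS_def)
  have injh: "inj h" using bh bij_is_inj by blast
  have hSome: "h (Some z) = Some (f z)" for z
  proof -
    have "h (Some z) \<noteq> None" using injh hN by (metis injD option.distinct(1))
    then show ?thesis by (auto simp: f_def)
  qed
  assume nt: "\<not> ?thesis"
  have "\<exists>z c w. cmod (z - c) \<le> cmod (w - c) \<and> cmod (f z - f c) > (real n + 1) * cmod (f w - f c)" for n :: nat
  proof (rule ccontr)
    assume "\<not> (\<exists>z c w. cmod (z - c) \<le> cmod (w - c) \<and> cmod (f z - f c) > (real n + 1) * cmod (f w - f c))"
    then have a: "\<forall>z c w. cmod (z - c) \<le> cmod (w - c) \<longrightarrow> cmod (f z - f c) \<le> (real n + 1) * cmod (f w - f c)"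
      by (auto simp: not_less)
    have "real n + 1 > 0" by simp
    with a nt show False unfolding f_def by blast
  qed
  then obtain zs cs ws where zcw: "\<And>n. cmod (zs n - cs n) \<le> cmod (ws n - cs n)"
     "\<And>n. cmod (f (zs n) - f (cs n)) > (real n + 1) * cmod (f (ws n) - f (cs n))"
    by metis
  define r where "r n = cmod (ws n - cs n)" for n
  have rpos: "r n > 0" for n
  proof (rule ccontr)
    assume "\<not> r n > 0"
    then have "ws n = cs n" by (simp add: r_def)
    then have "zs n = cs n" using zcw(1)[of n] by simp
    then have "cmod (f (zs n) - f (cs n)) = 0" by simp
    moreover have "(real n + 1) * cmod (f (ws n) - f (cs n)) \<ge> 0" by simp
    ultimately show False using zcw(2)[of n] by linarith
  qed
  define P where "P n = (cs n, r n)" for n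
  have PH: "P n \<in> H3" for n using rpos by (simp add: P_def H3_def)
  have "\<forall>n. \<exists>p. fst p \<in> \<Gamma>1 \<and> snd p \<in> K0 \<and> P n = fst (fst p) (snd p)"
  proof
    fix n
    obtain g kk where "g \<in> \<Gamma>1" "kk \<in> K0" "P n = fst g kk" using PH[of n] K0(3) by blast
    then show "\<exists>p. fst p \<in> \<Gamma>1 \<and> snd p \<in> K0 \<and> P n = fst (fst p) (snd p)" by (intro exI[of _ "(g,kk)"]) simp
  qed
  from choice[OF this] obtain gk where gk: "\<forall>n. fst (gk n) \<in> \<Gamma>1 \<and> snd (gk n) \<in> K0 \<and> P n = fst (fst (gk n)) (snd (gk n))"
    by (elim exE) blast
  define \<gamma> where "\<gamma> n = fst (gk n)" for n
  define k where "k n = snd (gk n)" for n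
  have \<gamma>: "\<And>n. \<gamma> n \<in> \<Gamma>1" and k: "\<And>n. k n \<in> K0" and Pk: "\<And>n. P n = fst (\<gamma> n) (k n)"
    using gk by (auto simp: \<gamma>_def k_def)
  have "\<forall>n. \<exists>g'. g' \<in> isom_grp \<and> (\<forall>\<xi>. h (snd (\<gamma> n) \<xi>) = snd g' (h \<xi>))"
    using conj \<gamma> by blast
  from choice[OF this] obtain \<gamma>' where \<gamma>'0: "\<forall>n. \<gamma>' n \<in> isom_grp \<and> (\<forall>\<xi>. h (snd (\<gamma> n) \<xi>) = snd (\<gamma>' n) (h \<xi>))"
    by (elim exE) blast
  have \<gamma>': "\<And>n. \<gamma>' n \<in> isom_grp" and cj: "\<And>n \<xi>. h (snd (\<gamma> n) \<xi>) = snd (\<gamma>' n) (h \<xi>)"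
    using \<gamma>'0 by auto
  have gI: "(fst (\<gamma> n), snd (\<gamma> n)) \<in> isom_grp" for n using G1 \<gamma> by auto
  have gI': "(fst (\<gamma>' n), snd (\<gamma>' n)) \<in> isom_grp" for n using \<gamma>' by auto
  have bg: "bij (snd (\<gamma> n))" for n using gI[of n] unfolding isom_grp_def by (simp only: mem_Collect_eq case_prod_conv)
  define iv where "iv n \<xi> = inv (snd (\<gamma> n)) \<xi>" for n \<xi>
  have iv: "snd (\<gamma> n) (iv n \<xi>) = \<xi>" for n \<xi> unfolding iv_def using bg bij_is_surj surj_f_inv_f by metis
  define az where "az n = iv n (Some (zs n))" for n
  define ac where "ac n = iv n (Some (cs n))" for n
  define aw where "aw n = iv n (Some (ws n))" for n
  define ao where "ao n = iv n None" for n
  have kH: "k n \<in> H3" for n using k K0(2) by blast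
  have src1: "Jf (stereo (k n)) (embS (az n)) (embS (ao n)) \<ge> 1/2" for n
  proof -
    have "Jf (stereo (k n)) (embS (az n)) (embS (ao n)) = Jf (stereo (P n)) (embS (Some (zs n))) (embS None)"
      using J_inv[OF gI[of n] kH[of n], of "az n" "ao n"] by (simp add: Pk az_def ao_def iv)
    also have "\<dots> = (r n)\<^sup>2 / ((cmod (zs n - cs n))\<^sup>2 + (r n)\<^sup>2)"
      by (simp add: P_def embS_Some embS_None J_stereo_N Dl_def)
    also have "\<dots> \<ge> 1/2"
    proof -
      have q: "(cmod (zs n - cs n))\<^sup>2 \<le> (r n)\<^sup>2" using zcw(1)[of n] by (simp add: r_def power_mono)
      have rp: "(r n)\<^sup>2 > 0" using rpos[of n] by simp
      have "(r n)\<^sup>2 / ((cmod (zs n - cs n))\<^sup>2 + (r n)\<^sup>2) \<ge> (r n)\<^sup>2 / (2 * (r n)\<^sup>2)"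
        by (rule divide_left_mono) (use q rp in \<open>auto intro!: mult_pos_pos add_nonneg_pos\<close>)
      moreover have "(r n)\<^sup>2 / (2 * (r n)\<^sup>2) = 1/2" using rp by simp
      ultimately show ?thesis by simp
    qed
    finally show ?thesis .
  qed
  have src2: "Jf (stereo (k n)) (embS (aw n)) (embS (ac n)) = 1/2" for n
  proof -
    have "Jf (stereo (k n)) (embS (aw n)) (embS (ac n)) = Jf (stereo (P n)) (embS (Some (ws n))) (embS (Some (cs n)))"
      using J_inv[OF gI[of n] kH[of n], of "aw n" "ac n"] by (simp add: Pk aw_def ac_def iv)
    also have "\<dots> = (r n)\<^sup>2 * (r n)\<^sup>2 / (((r n)\<^sup>2 + (r n)\<^sup>2) * (r n)\<^sup>2)"
      by (simp add: P_def embS_Some J_stereo Dl_def r_def)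
    also have "\<dots> = 1/2" using rpos[of n] by (simp add: field_simps)
    finally show ?thesis .
  qed
  define CRn where "CRn n = CR (embS (h (az n))) (embS (h (ac n))) (embS (h (aw n))) (embS (h (ao n)))" for n
  have img: "CRn n > (real n + 1)\<^sup>2" for n
  proof -
    have fne: "f (ws n) \<noteq> f (cs n)"
    proof
      assume "f (ws n) = f (cs n)"
      then have "h (Some (ws n)) = h (Some (cs n))" by (simp add: hSome)
      then have "Some (ws n) = Some (cs n)" using injh by (rule injD[rotated])
      then have "ws n = cs n" by simp
      then show False using rpos[of n] by (simp add: r_def)
    qed
    then have p: "cmod (f (ws n) - f (cs n)) > 0" by simp
    have "(real n + 1) * cmod (f (ws n) - f (cs n)) < cmod (f (zs n) - f (cs n))" using zcw(2) .
    then have "(real n + 1) < cmod (f (zs n) - f (cs n)) / cmod (f (ws n) - f (cs n))"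
      using p by (simp add: field_simps)
    then have "(real n + 1)\<^sup>2 < (cmod (f (zs n) - f (cs n)) / cmod (f (ws n) - f (cs n)))\<^sup>2"
      by (intro power_strict_mono) auto
    also have "\<dots> = CR (embS (Some (f (zs n)))) (embS (Some (f (cs n)))) (embS (Some (f (ws n)))) (embS None)"
      by (simp add: power_divide ratio_CR)
    also have "\<dots> = CR (embS (h (Some (zs n)))) (embS (h (Some (cs n)))) (embS (h (Some (ws n)))) (embS (h None))"
      by (simp add: hSome hN)
    also have "\<dots> = CR (embS (snd (\<gamma>' n) (h (az n)))) (embS (snd (\<gamma>' n) (h (ac n)))) (embS (snd (\<gamma>' n) (h (aw n)))) (embS (snd (\<gamma>' n) (h (ao n))))"
      by (simp add: az_def ac_def aw_def ao_def iv flip: cj)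
    also have "\<dots> = CRn n" unfolding CRn_def by (rule CR_inv[OF gI'])
    finally show ?thesis .
  qed
  define R where "R = range embS"
  define S where "S n = (k n, embS (az n), embS (ac n), embS (aw n), embS (ao n))" for n
  have cS: "compact (K0 \<times> R \<times> R \<times> R \<times> R)" using K0(1) compact_rangeS unfolding R_def
    by (intro compact_Times)
  have "\<forall>n. S n \<in> K0 \<times> R \<times> R \<times> R \<times> R" using k by (auto simp: S_def R_def)
  then obtain l \<phi> where l: "l \<in> K0 \<times> R \<times> R \<times> R \<times> R" and \<phi>: "strict_mono \<phi>" and L: "(S \<circ> \<phi>) \<longlonglongrightarrow> l"
    using compact_imp_seq_compact[OF cS] seq_compactE by metis
  obtain ks Az Ac Aw Ao where le: "l = (ks, Az, Ac, Aw, Ao)" by (metis prod.exhaust)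
  have ksK: "ks \<in> K0" using l le by auto
  then have ksH: "ks \<in> H3" using K0(2) by blast
  obtain xz xc xw xo where A: "Az = embS xz" "Ac = embS xc" "Aw = embS xw" "Ao = embS xo"
    using l le unfolding R_def by auto
  have L1: "(\<lambda>n. k (\<phi> n)) \<longlonglongrightarrow> ks" using tendsto_fst[OF L] by (simp add: le S_def o_def)
  have L2: "(\<lambda>n. embS (az (\<phi> n))) \<longlonglongrightarrow> embS xz" using tendsto_fst[OF tendsto_snd[OF L]] by (simp add: le S_def o_def A)
  have L3: "(\<lambda>n. embS (ac (\<phi> n))) \<longlonglongrightarrow> embS xc" using tendsto_fst[OF tendsto_snd[OF tendsto_snd[OF L]]] by (simp add: le S_def o_def A)
  have L4: "(\<lambda>n. embS (aw (\<phi> n))) \<longlonglongrightarrow> embS xw" using tendsto_fst[OF tendsto_snd[OF tendsto_snd[OF tendsto_snd[OF L]]]] by (simp add: le S_def o_def A)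
  have L5: "(\<lambda>n. embS (ao (\<phi> n))) \<longlonglongrightarrow> embS xo" using tendsto_snd[OF tendsto_snd[OF tendsto_snd[OF tendsto_snd[OF L]]]] by (simp add: le S_def o_def A)
  have Ls: "(\<lambda>n. stereo (k (\<phi> n))) \<longlonglongrightarrow> stereo ks" using stereo_tendsto[OF L1] .
  have pos: "\<And>a. DD (embS a) (stereo ks) \<noteq> 0" using DD_embS_pos[OF ksH] by (metis less_irrefl)
  have "(\<lambda>n. Jf (stereo (k (\<phi> n))) (embS (az (\<phi> n))) (embS (ao (\<phi> n)))) \<longlonglongrightarrow> Jf (stereo ks) (embS xz) (embS xo)"
    by (intro Jf_tendsto Ls L2 L5 pos)
  then have "Jf (stereo ks) (embS xz) (embS xo) \<ge> 1/2"
    by (rule LIMSEQ_le_const) (use src1 in auto)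
  then have n1: "xz \<noteq> xo" using Jf_same by fastforce
  have "(\<lambda>n. Jf (stereo (k (\<phi> n))) (embS (aw (\<phi> n))) (embS (ac (\<phi> n)))) \<longlonglongrightarrow> Jf (stereo ks) (embS xw) (embS xc)"
    by (intro Jf_tendsto Ls L4 L3 pos)
  then have "Jf (stereo ks) (embS xw) (embS xc) = 1/2"
    using src2 by (simp add: LIMSEQ_const_iff)
  then have n2: "xw \<noteq> xc" using Jf_same by fastforce
  have hc: "(\<lambda>n. embS (h (\<sigma> n))) \<longlonglongrightarrow> embS (h \<xi>)" if "(\<lambda>n. embS (\<sigma> n)) \<longlonglongrightarrow> embS \<xi>" for \<sigma> \<xi>
    using ch that unfolding contS_def by blast
  have d1: "DD (embS (h xw)) (embS (h xc)) \<noteq> 0" using n2 injh inj_embS by (simp add: DD_eq0 inj_eq)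
  have d2: "DD (embS (h xz)) (embS (h xo)) \<noteq> 0" using n1 injh inj_embS by (simp add: DD_eq0 inj_eq)
  have "(\<lambda>n. CRn (\<phi> n)) \<longlonglongrightarrow> CR (embS (h xz)) (embS (h xc)) (embS (h xw)) (embS (h xo))"
    unfolding CRn_def
    by (intro CR_tendsto hc[of "\<lambda>n. az (\<phi> n)"] hc[of "\<lambda>n. ac (\<phi> n)"] hc[of "\<lambda>n. aw (\<phi> n)"] hc[of "\<lambda>n. ao (\<phi> n)"] L2 L3 L4 L5 d1 d2)
  then have "Bseq (\<lambda>n. CRn (\<phi> n))" by (intro convergent_imp_Bseq convergentI)
  then obtain B where B: "\<And>n. norm (CRn (\<phi> n)) \<le> B" by (meson BseqE)
  obtain n :: nat where nB: "real n > B" using reals_Archimedean2 by blast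
  have "real n \<le> real (\<phi> n)" using seq_suble[OF \<phi>, of n] by simp
  also have "\<dots> < (real (\<phi> n) + 1)\<^sup>2" by (simp add: power2_eq_square algebra_simps) (smt (verit) of_nat_0_le_iff mult_nonneg_nonneg)
  also have "\<dots> < CRn (\<phi> n)" by (rule img)
  also have "\<dots> \<le> B" using B[of n] by simp
  finally show False using nB by simp
qed

lemma content_ball_c: "r \<ge> 0 \<Longrightarrow> measure lborel (ball (c::complex) r) = r\<^sup>2 * measure lborel (ball (0::complex) 1)"
  using content_ball_conv_unit_ball[of r c] by simp

lemma disk_set_bdd:
  fixes X :: "complex set"
  assumes "X \<subseteq> cball a M"
  shows "bdd_above {(\<Sum>i<n. pi * (r i)\<^sup>2) | (n::nat) c r.
       (\<forall>i<n. r i > 0 \<and> ball (c i) (r i) \<subseteq> X) \<and>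
       (\<forall>i<n. \<forall>j<n. i \<noteq> j \<longrightarrow> ball (c i) (r i) \<inter> ball (c j) (r j) = {})}"
proof -
  define \<kappa> where "\<kappa> = measure lborel (ball (0::complex) 1)"
  have kp: "\<kappa> > 0" unfolding \<kappa>_def by (rule content_ball_pos) simp
  show ?thesis
  proof (rule bdd_aboveI, clarify)
    fix n :: nat and c :: "nat \<Rightarrow> complex" and r :: "nat \<Rightarrow> real"
    assume h1: "\<forall>i<n. r i > 0 \<and> ball (c i) (r i) \<subseteq> X"
      and h2: "\<forall>i<n. \<forall>j<n. i \<noteq> j \<longrightarrow> ball (c i) (r i) \<inter> ball (c j) (r j) = {}"
    have fin: "\<And>i. emeasure lborel (ball (c i) (r i)) \<noteq> \<infinity>"
      using emeasure_lborel_ball_finite by (simp add: less_top)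
    have "(\<Sum>i<n. pi * (r i)\<^sup>2) = (\<Sum>i<n. pi / \<kappa> * measure lborel (ball (c i) (r i)))"
    proof (rule sum.cong[OF refl])
      fix i assume "i \<in> {..<n}"
      then have "r i \<ge> 0" using h1 by auto
      then have "measure lborel (ball (c i) (r i)) = (r i)\<^sup>2 * \<kappa>" unfolding \<kappa>_def by (rule content_ball_c)
      then show "pi * (r i)\<^sup>2 = pi / \<kappa> * measure lborel (ball (c i) (r i))"
        using kp by (simp only:) (simp add: field_simps)
    qed
    also have "\<dots> = pi / \<kappa> * measure lborel (\<Union>i\<in>{..<n}. ball (c i) (r i))"
      unfolding sum_distrib_left[symmetric]
      by (subst measure_finite_Union) (use h2 fin in \<open>auto simp: disjoint_family_on_def\<close>)
    also have "\<dots> \<le> pi / \<kappa> * measure lborel (cball a M)"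
    proof (rule mult_left_mono)
      show "measure lborel (\<Union>i\<in>{..<n}. ball (c i) (r i)) \<le> measure lborel (cball a M)"
      proof (rule measure_mono_fmeasurable)
        show "(\<Union>i\<in>{..<n}. ball (c i) (r i)) \<subseteq> cball a M" using h1 assms by blast
        show "(\<Union>i\<in>{..<n}. ball (c i) (r i)) \<in> sets lborel" by auto
        show "cball a M \<in> fmeasurable lborel" using emeasure_lborel_cball_finite by (intro fmeasurableI) auto
      qed
      show "0 \<le> pi / \<kappa>" using kp by simp
    qed
    finally show "(\<Sum>i<n. pi * (r i)\<^sup>2) \<le> pi / \<kappa> * measure lborel (cball a M)" .
  qed
qed

lemma packing:
  fixes f :: "complex \<Rightarrow> complex" and uu vv :: "'a \<Rightarrow> real" and X :: "'a set"
  assumes K: "K > 0" and QS: "\<forall>z c w. cmod (z - c) \<le> cmod (w - c) \<longrightarrow> cmod (f z - f c) \<le> K * cmod (f w - f c)"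
    and injf: "inj f" and surjf: "surj f"
    and s: "0 < s" "0 \<le> y - s" "y + s \<le> 1"
    and X: "finite X" "\<forall>x\<in>X. 0 \<le> uu x \<and> uu x < vv x \<and> vv x \<le> 1 \<and> vv x - uu x \<le> 2 * s"
    and no: "\<forall>a\<in>X. \<forall>b\<in>X. a \<noteq> b \<longrightarrow> vv a \<le> uu b \<or> vv b \<le> uu a"
  shows "(\<Sum>x\<in>X. pi * (cmod (f (Complex (vv x) y) - f (Complex (uu x) y)) / (2*K))\<^sup>2) \<le> disk_alpha (f ` rect {y-s..y+s})"
proof -
  define cc where "cc x = f (Complex ((uu x + vv x)/2) y)" for x
  define rr where "rr x = cmod (f (Complex (vv x) y) - f (Complex (uu x) y)) / (2*K)" for x
  define U where "U x = {p. uu x < Re p \<and> Re p < vv x \<and> \<bar>Im p - y\<bar> < (vv x - uu x)/2}" for x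
  define Y where "Y = f ` rect {y-s..y+s}"
  have ball_sub: "ball (cc x) (rr x) \<subseteq> f ` U x" if x: "x \<in> X" for x
  proof
    fix b assume b: "b \<in> ball (cc x) (rr x)"
    obtain p where bp: "b = f p" using surjf by (metis surjD)
    show "b \<in> f ` U x"
    proof (rule ccontr)
      assume "b \<notin> f ` U x"
      then have pU: "p \<notin> U x" using bp by blast
      define m where "m = Complex ((uu x + vv x)/2) y"
      define u' where "u' = Complex (uu x) y"
      define v' where "v' = Complex (vv x) y"
      have uv: "uu x < vv x" using X x by auto
      have dp: "(vv x - uu x)/2 \<le> cmod (p - m)"
      proof -
        have "(vv x - uu x)/2 \<le> \<bar>Re (p - m)\<bar> \<or> (vv x - uu x)/2 \<le> \<bar>Im (p - m)\<bar>"
        proof -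
          have n: "\<not> (uu x < Re p \<and> Re p < vv x \<and> \<bar>Im p - y\<bar> < (vv x - uu x)/2)" using pU unfolding U_def by simp
          have r: "Re (p - m) = Re p - (uu x + vv x)/2" "Im (p - m) = Im p - y" by (simp_all add: m_def)
          define t where "t = Re p - (uu x + vv x)/2"
          have a1: "t \<le> \<bar>t\<bar>" "-t \<le> \<bar>t\<bar>" by (rule abs_ge_self, rule abs_ge_minus_self)
          consider "Re p \<le> uu x" | "Re p \<ge> vv x" | "\<bar>Im p - y\<bar> \<ge> (vv x - uu x)/2" using n by force
          then have "(vv x - uu x)/2 \<le> \<bar>t\<bar> \<or> (vv x - uu x)/2 \<le> \<bar>Im p - y\<bar>"
          proof cases
            case 1 then have "(vv x - uu x)/2 \<le> -t" unfolding t_def by (simp add: field_simps)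
            then show ?thesis using a1 by simp
          next
            case 2 then have "(vv x - uu x)/2 \<le> t" unfolding t_def by (simp add: field_simps)
            then show ?thesis using a1 by simp
          qed simp
          then show ?thesis unfolding r t_def .
        qed
        then show ?thesis using abs_Re_le_cmod[of "p - m"] abs_Im_le_cmod[of "p - m"] by linarith
      qed
      have du: "cmod (u' - m) = (vv x - uu x)/2" using uv
        by (simp add: u'_def m_def cmod_def, (simp add: field_simps)?)
      have dv: "cmod (v' - m) = (vv x - uu x)/2" using uv
        by (simp add: v'_def m_def cmod_def, (simp add: field_simps)?)
      have q1: "cmod (f u' - f m) \<le> K * cmod (f p - f m)" using QS du dp by simp
      have q2: "cmod (f v' - f m) \<le> K * cmod (f p - f m)" using QS dv dp by simp
      have "cmod (f v' - f u') \<le> cmod (f v' - f m) + cmod (f u' - f m)"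
        using norm_triangle_ineq4[of "f v' - f m" "f u' - f m"] by simp
      also have "\<dots> \<le> 2 * K * cmod (f p - f m)" using q1 q2 by simp
      finally have "rr x \<le> cmod (f p - f m)" using K unfolding rr_def u'_def v'_def by (simp add: field_simps)
      moreover have "dist (cc x) b < rr x" using b by simp
      ultimately show False by (simp add: bp cc_def m_def dist_norm norm_minus_commute)
    qed
  qed
  have U_rect: "U x \<subseteq> rect {y-s..y+s}" if x: "x \<in> X" for x
  proof
    fix p assume p: "p \<in> U x"
    have h: "uu x < Re p" "Re p < vv x" "\<bar>Im p - y\<bar> < (vv x - uu x)/2" using p unfolding U_def by auto
    have w: "0 \<le> uu x" "vv x \<le> 1" "vv x - uu x \<le> 2 * s" using X x by auto
    have "(vv x - uu x)/2 \<le> s" using w(3) by (simp add: field_simps)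
    with h(3) have "\<bar>Im p - y\<bar> < s" by (rule less_le_trans)
    then have "Im p - y < s" "-(Im p - y) < s" by (simp_all only: abs_less_iff)
    then have "0 \<le> Re p" "Re p \<le> 1" "y - s \<le> Im p" "Im p \<le> y + s" using h w by linarith+
    then show "p \<in> rect {y-s..y+s}" unfolding rect_def by (intro CollectI exI[of _ "Re p"] exI[of _ "Im p"]) auto
  qed
  have U_disj: "U a \<inter> U b = {}" if "a \<in> X" "b \<in> X" "a \<noteq> b" for a b
    using no that unfolding U_def by fastforce
  have rpos: "rr x > 0" if "x \<in> X" for x
  proof -
    have "Complex (vv x) y \<noteq> Complex (uu x) y" using X that by auto
    then have "f (Complex (vv x) y) \<noteq> f (Complex (uu x) y)" using injf by (meson injD)
    then show ?thesis using K by (simp add: rr_def)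
  qed
  obtain e where e: "bij_betw e {0..<card X} X" using ex_bij_betw_nat_finite X(1) by blast
  have eX: "i < card X \<Longrightarrow> e i \<in> X" for i using e by (auto simp: bij_betw_def)
  have einj: "i < card X \<Longrightarrow> j < card X \<Longrightarrow> i \<noteq> j \<Longrightarrow> e i \<noteq> e j" for i j
    using e by (auto simp: bij_betw_def inj_on_def)
  have bdd: "Y \<subseteq> cball (f 0) (K * cmod (f 2 - f 0))"
  proof
    fix q assume "q \<in> Y"
    then obtain p where p: "p \<in> rect {y-s..y+s}" "q = f p" unfolding Y_def by blast
    have "0 \<le> Re p" "Re p \<le> 1" "0 \<le> Im p" "Im p \<le> 1" using p s unfolding rect_def by auto
    then have "cmod (p - 0) \<le> cmod (2 - 0)" using cmod_le[of p] by simp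
    then have "cmod (f p - f 0) \<le> K * cmod (f 2 - f 0)" using QS by blast
    then show "q \<in> cball (f 0) (K * cmod (f 2 - f 0))" using p by (simp add: dist_norm norm_minus_commute)
  qed
  have mem: "(\<Sum>i<card X. pi * (rr (e i))\<^sup>2) \<in> {(\<Sum>i<n. pi * (r i)\<^sup>2) | (n::nat) c r.
       (\<forall>i<n. r i > 0 \<and> ball (c i) (r i) \<subseteq> Y) \<and>
       (\<forall>i<n. \<forall>j<n. i \<noteq> j \<longrightarrow> ball (c i) (r i) \<inter> ball (c j) (r j) = {})}"
  proof (intro CollectI exI conjI allI impI)
    show "(\<Sum>i<card X. pi * (rr (e i))\<^sup>2) = (\<Sum>i<card X. pi * (rr (e i))\<^sup>2)" ..
    fix i assume i: "i < card X"
    show "rr (e i) > 0" using rpos eX i by blast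
    show "ball (cc (e i)) (rr (e i)) \<subseteq> Y" using ball_sub[OF eX[OF i]] U_rect[OF eX[OF i]] unfolding Y_def by blast
    fix j assume j: "j < card X" and ij: "i \<noteq> j"
    have "f ` U (e i) \<inter> f ` U (e j) = {}"
      using U_disj[OF eX[OF i] eX[OF j] einj[OF i j ij]] injf by (auto simp: inj_def)
    then show "ball (cc (e i)) (rr (e i)) \<inter> ball (cc (e j)) (rr (e j)) = {}"
      using ball_sub[OF eX[OF i]] ball_sub[OF eX[OF j]] by blast
  qed
  have "(\<Sum>x\<in>X. pi * (rr x)\<^sup>2) = (\<Sum>i<card X. pi * (rr (e i))\<^sup>2)"
    using sum.reindex_bij_betw[OF e, of "\<lambda>x. pi * (rr x)\<^sup>2"] by (simp add: lessThan_atLeast0)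
  also have "\<dots> \<le> disk_alpha Y"
    unfolding disk_alpha_def by (rule cSup_upper[OF mem disk_set_bdd[OF bdd]])
  finally show ?thesis unfolding rr_def Y_def .
qed

lemma CS_card: "(\<Sum>x\<in>X. d x)\<^sup>2 \<le> real (card X) * (\<Sum>x\<in>X. (d x)\<^sup>2)" for d :: "'a \<Rightarrow> real"
  using Cauchy_Schwarz_ineq_sum[of "\<lambda>_. 1" d X] by simp

lemma telescope: "cmod (G k - G 0) \<le> (\<Sum>j<k. cmod (G (Suc j) - G j))"
proof (induction k)
  case 0 then show ?case by simp
next
  case (Suc k)
  have "cmod (G (Suc k) - G 0) \<le> cmod (G (Suc k) - G k) + cmod (G k - G 0)"
    using norm_triangle_ineq[of "G (Suc k) - G k" "G k - G 0"] by simp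
  then show ?case using Suc by simp
qed

lemma main_est:
  fixes f :: "complex \<Rightarrow> complex" and N K y :: real and n :: nat and uu vv :: "nat \<Rightarrow> real"
  assumes K: "K > 0" and QS: "\<forall>z c w. cmod (z - c) \<le> cmod (w - c) \<longrightarrow> cmod (f z - f c) \<le> K * cmod (f w - f c)"
    and injf: "inj f" and surjf: "surj f" and y: "0 < y" "y < 1"
    and N: "\<And>a b. 0 \<le> a \<Longrightarrow> a < b \<Longrightarrow> b \<le> 1 \<Longrightarrow> (a + b) / 2 = y \<Longrightarrow> disk_alpha (f ` rect {a..b}) < N * (b - a)"
    and iv: "\<forall>i<n. 0 \<le> uu i \<and> uu i \<le> vv i \<and> vv i \<le> 1"
    and no: "\<forall>i<n. \<forall>j<n. i \<noteq> j \<longrightarrow> vv i \<le> uu j \<or> vv j \<le> uu i"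
  shows "(\<Sum>i<n. cmod (f (Complex (vv i) y) - f (Complex (uu i) y)))\<^sup>2
      \<le> (8 * K\<^sup>2 * (\<bar>N\<bar> + 1) / pi) * (\<Sum>i<n. vv i - uu i)"
proof -
  define g where "g t = f (Complex t y)" for t
  define C where "C = 8 * K\<^sup>2 * (\<bar>N\<bar> + 1) / pi"
  have Cpos: "C > 0" using K by (simp add: C_def)
  define I where "I = {i. i < n \<and> uu i < vv i}"
  have finI: "finite I" unfolding I_def by (rule finite_subset[of _ "{..<n}"]) auto
  define \<Lambda> where "\<Lambda> = (\<Sum>i<n. vv i - uu i)"
  have \<Lambda>nn: "\<Lambda> \<ge> 0" unfolding \<Lambda>_def using iv by (intro sum_nonneg) auto
  have LHS_I: "(\<Sum>i<n. cmod (g (vv i) - g (uu i))) = (\<Sum>i\<in>I. cmod (g (vv i) - g (uu i)))"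
  proof (rule sum.mono_neutral_right)
    show "I \<subseteq> {..<n}" by (auto simp: I_def)
    show "\<forall>i\<in>{..<n} - I. cmod (g (vv i) - g (uu i)) = 0"
      using iv by (auto simp: I_def) (metis order_le_less)
  qed simp
  have \<Lambda>_I: "\<Lambda> = (\<Sum>i\<in>I. vv i - uu i)"
    unfolding \<Lambda>_def
  proof (rule sum.mono_neutral_right)
    show "I \<subseteq> {..<n}" by (auto simp: I_def)
    show "\<forall>i\<in>{..<n} - I. vv i - uu i = 0"
      using iv by (auto simp: I_def)
  qed simp
  show ?thesis
  proof (cases "I = {}")
    case True
    then show ?thesis using LHS_I \<Lambda>nn Cpos unfolding g_def \<Lambda>_def C_def by simp
  next
    case False
    define lm where "lm = Min ((\<lambda>i. vv i - uu i) ` I)"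
    have lmpos: "lm > 0" unfolding lm_def using finI False by (subst Min_gr_iff) (auto simp: I_def)
    have lmle: "lm \<le> vv i - uu i" if "i \<in> I" for i unfolding lm_def using finI that by (intro Min_le) auto
    define s where "s = min (min y (1 - y)) (lm / 2)"
    have spos: "s > 0" using y lmpos by (simp add: s_def)
    have sy: "0 \<le> y - s" "y + s \<le> 1" using y by (auto simp: s_def)
    have slm: "2 * s \<le> vv i - uu i" if "i \<in> I" for i proof -
      have "s \<le> lm / 2" unfolding s_def by (rule min.cobounded2)
      then show ?thesis using lmle[OF that] by linarith
    qed
    define k where "k i = nat \<lceil>(vv i - uu i) / (2 * s)\<rceil>" for i
    have k1: "real (k i) \<ge> (vv i - uu i) / (2 * s)" for i
      unfolding k_def by linarith
    have k2: "real (k i) \<le> (vv i - uu i) / s" if "i \<in> I" for i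
    proof -
      have ge1: "(vv i - uu i) / (2 * s) \<ge> 1" using slm[OF that] spos by simp
      have "real (k i) \<le> (vv i - uu i) / (2 * s) + 1" unfolding k_def using ge1 by linarith
      also have "\<dots> \<le> 2 * ((vv i - uu i) / (2 * s))" using ge1 by linarith
      also have "\<dots> = (vv i - uu i) / s" using spos by (simp add: field_simps)
      finally show ?thesis .
    qed
    have kpos: "k i > 0" if "i \<in> I" for i
    proof -
      have "(vv i - uu i) / (2 * s) > 0" using that spos by (simp add: I_def)
      then show ?thesis using k1[of i] by linarith
    qed
    define X where "X = Sigma I (\<lambda>i. {..<k i})"
    have finX: "finite X" unfolding X_def using finI by auto
    define step where "step i = (vv i - uu i) / real (k i)" for i
    define uu' where "uu' p = uu (fst p) + real (snd p) * step (fst p)" for p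
    define vv' where "vv' p = uu (fst p) + real (Suc (snd p)) * step (fst p)" for p
    have steppos: "step i > 0" if "i \<in> I" for i using kpos[OF that] that by (simp add: step_def I_def)
    have stepk: "real (k i) * step i = vv i - uu i" if "i \<in> I" for i using kpos[OF that] by (simp add: step_def)
    have step2s: "step i \<le> 2 * s" if "i \<in> I" for i
    proof -
      have "vv i - uu i \<le> 2 * s * real (k i)" using k1[of i] spos by (simp add: field_simps)
      then show ?thesis using kpos[OF that] by (simp add: step_def field_simps)
    qed
    have pieces: "\<forall>x\<in>X. 0 \<le> uu' x \<and> uu' x < vv' x \<and> vv' x \<le> 1 \<and> vv' x - uu' x \<le> 2 * s"
    proof
      fix x assume x: "x \<in> X"
      obtain i j where xij: "x = (i,j)" and i: "i \<in> I" and j: "j < k i" using x unfolding X_def by auto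
      have sp: "step i > 0" using steppos[OF i] .
      have "real (Suc j) * step i \<le> real (k i) * step i" using j sp by (intro mult_right_mono) auto
      then have "vv' x \<le> vv i" using stepk[OF i] by (simp add: vv'_def xij)
      moreover have "uu' x \<ge> uu i" using sp by (simp add: uu'_def xij)
      moreover have "vv' x - uu' x = step i" by (simp add: uu'_def vv'_def xij algebra_simps)
      ultimately show "0 \<le> uu' x \<and> uu' x < vv' x \<and> vv' x \<le> 1 \<and> vv' x - uu' x \<le> 2 * s"
        using iv i sp step2s[OF i] by (auto simp: I_def)
    qed
    have inside: "uu i \<le> uu' x \<and> vv' x \<le> vv i" if xX: "x \<in> X" and fx: "fst x = i" for x i
    proof -
      obtain j where xij: "x = (i,j)" and i: "i \<in> I" and j: "j < k i" using xX fx unfolding X_def by (cases x) auto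
      have sp: "step i > 0" using steppos[OF i] .
      have "real (Suc j) * step i \<le> real (k i) * step i" using j sp by (intro mult_right_mono) auto
      then show ?thesis using stepk[OF i] sp by (simp add: vv'_def uu'_def xij)
    qed
    have nono: "\<forall>a\<in>X. \<forall>b\<in>X. a \<noteq> b \<longrightarrow> vv' a \<le> uu' b \<or> vv' b \<le> uu' a"
    proof (intro ballI impI)
      fix a b assume a: "a \<in> X" and b: "b \<in> X" and ab: "a \<noteq> b"
      show "vv' a \<le> uu' b \<or> vv' b \<le> uu' a"
      proof (cases "fst a = fst b")
        case True
        then have "snd a \<noteq> snd b" using ab by (metis prod.expand)
        then consider "snd a < snd b" | "snd b < snd a" by linarith
        moreover have sp: "step (fst a) > 0" using a steppos unfolding X_def by auto
        ultimately show ?thesis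
        proof cases
          case 1
          then have "real (Suc (snd a)) * step (fst a) \<le> real (snd b) * step (fst a)" using sp by (intro mult_right_mono) auto
          then show ?thesis using True by (simp add: uu'_def vv'_def)
        next
          case 2
          then have "real (Suc (snd b)) * step (fst a) \<le> real (snd a) * step (fst a)" using sp by (intro mult_right_mono) auto
          then show ?thesis using True by (simp add: uu'_def vv'_def)
        qed
      next
        case False
        have "fst a < n" "fst b < n" using a b unfolding X_def I_def by auto
        then have "vv (fst a) \<le> uu (fst b) \<or> vv (fst b) \<le> uu (fst a)" using no False by blast
        then show ?thesis using inside[OF a refl] inside[OF b refl] by linarith
      qed
    qed
    define d where "d x = cmod (f (Complex (vv' x) y) - f (Complex (uu' x) y))" for x
    have pack: "(\<Sum>x\<in>X. pi * (d x / (2*K))\<^sup>2) \<le> disk_alpha (f ` rect {y-s..y+s})"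
      unfolding d_def by (rule packing[OF K QS injf surjf spos sy finX pieces nono])
    have stiff: "disk_alpha (f ` rect {y-s..y+s}) < N * ((y+s) - (y-s))"
      using N[of "y-s" "y+s"] sy spos by simp
    have "(\<Sum>x\<in>X. pi * (d x / (2*K))\<^sup>2) = pi / (4 * K\<^sup>2) * (\<Sum>x\<in>X. (d x)\<^sup>2)"
      by (simp add: sum_distrib_left power_divide field_simps sum_divide_distrib)
    then have "pi / (4 * K\<^sup>2) * (\<Sum>x\<in>X. (d x)\<^sup>2) < N * (2 * s)" using pack stiff by simp
    then have "(\<Sum>x\<in>X. (d x)\<^sup>2) < N * (2 * s) * (4 * K\<^sup>2) / pi" using K by (simp add: field_simps)
    also have "\<dots> \<le> C * s"
    proof -
      have P: "0 \<le> 2 * s * (4 * K\<^sup>2) / pi" using spos by simp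
      have "N * (2 * s) * (4 * K\<^sup>2) / pi = N * (2 * s * (4 * K\<^sup>2) / pi)" by simp
      also have "\<dots> \<le> (\<bar>N\<bar> + 1) * (2 * s * (4 * K\<^sup>2) / pi)" by (rule mult_right_mono[OF _ P]) linarith
      also have "\<dots> = C * s" by (simp add: C_def)
      finally show ?thesis .
    qed
    finally have sq: "(\<Sum>x\<in>X. (d x)\<^sup>2) \<le> C * s" by simp
    have cardX: "real (card X) \<le> \<Lambda> / s"
    proof -
      have "card X = (\<Sum>i\<in>I. card {..<k i})" unfolding X_def using finI by (simp add: card_SigmaI)
      then have "real (card X) = (\<Sum>i\<in>I. real (k i))" by simp
      also have "\<dots> \<le> (\<Sum>i\<in>I. (vv i - uu i) / s)" by (intro sum_mono k2)
      also have "\<dots> = \<Lambda> / s" unfolding \<Lambda>_I by (simp add: sum_divide_distrib)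
      finally show ?thesis .
    qed
    have tele: "cmod (g (vv i) - g (uu i)) \<le> (\<Sum>j<k i. d (i,j))" if i: "i \<in> I" for i
    proof -
      define G where "G j = g (uu i + real j * step i)" for j
      have "G (k i) = g (vv i)" using stepk[OF i] by (simp add: G_def)
      moreover have "G 0 = g (uu i)" by (simp add: G_def)
      moreover have "d (i,j) = cmod (G (Suc j) - G j)" for j by (simp add: d_def G_def g_def uu'_def vv'_def)
      ultimately show ?thesis using telescope[of G "k i"] by simp
    qed
    have "(\<Sum>i<n. cmod (g (vv i) - g (uu i))) \<le> (\<Sum>x\<in>X. d x)"
    proof -
      have "(\<Sum>i<n. cmod (g (vv i) - g (uu i))) \<le> (\<Sum>i\<in>I. \<Sum>j<k i. d (i,j))"
        unfolding LHS_I by (intro sum_mono tele)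
      also have "\<dots> = (\<Sum>x\<in>X. d x)" unfolding X_def using finI by (simp add: sum.Sigma)
      finally show ?thesis .
    qed
    then have "(\<Sum>i<n. cmod (g (vv i) - g (uu i)))\<^sup>2 \<le> (\<Sum>x\<in>X. d x)\<^sup>2"
      by (intro power_mono) (auto intro: sum_nonneg)
    also have "\<dots> \<le> real (card X) * (\<Sum>x\<in>X. (d x)\<^sup>2)" by (rule CS_card)
    also have "\<dots> \<le> (\<Lambda> / s) * (C * s)"
      by (intro mult_mono cardX sq) (use \<Lambda>nn spos in \<open>auto intro: sum_nonneg\<close>)
    also have "\<dots> = C * \<Lambda>" using spos by simp
    finally show ?thesis unfolding g_def C_def \<Lambda>_def .
  qed
qed

lemma hSome_lem: assumes "bij h" "h None = None" shows "h (Some z) = Some (the (h (Some z)))"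
proof -
  have "h (Some z) \<noteq> None" using assms bij_is_inj by (metis injD option.distinct(1))
  then show ?thesis by auto
qed

theorem theorem3p7:
  fixes H :: "complex \<times> real \<Rightarrow> complex \<times> real"
    and h :: "complex option \<Rightarrow> complex option"
    and y :: real
    and \<pi> :: "complex \<Rightarrow> real"
  assumes "equivariant_pair H h"
    and "h None = None"
    and "0 < y" and "y < 1"
    and "stiff_point (\<lambda>J. disk_alpha ((\<lambda>z. the (h (Some z))) ` rect J)) y"
    and "linear \<pi>"
  shows "abs_cont_on 0 1 (\<lambda>t. \<pi> (the (h (Some (Complex t y)))))"
proof -
  have hS: "homeoS h" using assms(1) unfolding equivariant_pair_def by simp
  have "\<exists>\<Gamma>1 \<Gamma>2. nice_lattice \<Gamma>1 \<and> nice_lattice \<Gamma>2 \<and> (\<forall>\<gamma>\<in>\<Gamma>1. \<exists>\<gamma>'\<in>\<Gamma>2. conj_rel H h \<gamma> \<gamma>')"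
    using assms(1) unfolding equivariant_pair_def by auto
  then obtain \<Gamma>1 \<Gamma>2 where nl1: "nice_lattice \<Gamma>1" and nl2: "nice_lattice \<Gamma>2"
    and c1: "\<forall>\<gamma>\<in>\<Gamma>1. \<exists>\<gamma>'\<in>\<Gamma>2. conj_rel H h \<gamma> \<gamma>'" by auto
  have G1: "\<Gamma>1 \<subseteq> isom_grp" and G2: "\<Gamma>2 \<subseteq> isom_grp" using nl1 nl2 by (auto simp: nice_lattice_def)
  have "\<exists>K0. compact K0 \<and> K0 \<subseteq> H3 \<and> (\<Union>\<gamma>\<in>\<Gamma>1. fst \<gamma> ` K0) = H3"
    using nl1 unfolding nice_lattice_def by (elim conjE)
  then obtain K0 where K0: "compact K0" "K0 \<subseteq> H3" "(\<Union>\<gamma>\<in>\<Gamma>1. fst \<gamma> ` K0) = H3"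
    by auto
  have conj: "\<forall>\<gamma>\<in>\<Gamma>1. \<exists>\<gamma>'\<in>isom_grp. \<forall>\<xi>. h (snd \<gamma> \<xi>) = snd \<gamma>' (h \<xi>)"
    using c1 G2 unfolding conj_rel_def by blast
  obtain K where K: "K > 0" and QS0: "\<forall>z c w. cmod (z - c) \<le> cmod (w - c) \<longrightarrow>
     cmod (the (h (Some z)) - the (h (Some c))) \<le> K * cmod (the (h (Some w)) - the (h (Some c)))"
    using weak_QS[OF hS assms(2) G1 K0 conj] by blast
  define f where "f z = the (h (Some z))" for z
  have QS: "\<forall>z c w. cmod (z - c) \<le> cmod (w - c) \<longrightarrow> cmod (f z - f c) \<le> K * cmod (f w - f c)"
    using QS0 unfolding f_def .
  have bh: "bij h" using hS by (simp add: homeoS_def)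
  have hSome: "h (Some z) = Some (f z)" for z unfolding f_def by (rule hSome_lem[OF bh assms(2)])
  have injf: "inj f"
  proof (rule injI)
    fix a b assume "f a = f b"
    then have "h (Some a) = h (Some b)" by (simp add: hSome)
    then have "Some a = Some b" using bh bij_is_inj injD by metis
    then show "a = b" by simp
  qed
  have surjf: "surj f"
  proof -
    have "w \<in> range f" for w
    proof -
      obtain \<xi> where \<xi>: "h \<xi> = Some w" using bh bij_is_surj by (metis surjD)
      have "\<xi> \<noteq> None"
      proof
        assume "\<xi> = None" then show False using \<xi> assms(2) by simp
      qed
      then obtain z where "\<xi> = Some z" by auto
      then have "f z = w" using \<xi> by (simp add: f_def)
      then show ?thesis by blast
    qed
    then show ?thesis by blast
  qed
  obtain N where N0: "\<not> (\<exists>a b. 0 \<le> a \<and> a < b \<and> b \<le> 1 \<and> (a + b) / 2 = y \<and> disk_alpha (f ` rect {a..b}) \<ge> N * (b - a))"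
    using assms(5) unfolding stiff_point_def f_def by blast
  have N: "\<And>a b. 0 \<le> a \<Longrightarrow> a < b \<Longrightarrow> b \<le> 1 \<Longrightarrow> (a + b) / 2 = y \<Longrightarrow> disk_alpha (f ` rect {a..b}) < N * (b - a)"
  proof -
    fix a b :: real assume "0 \<le> a" "a < b" "b \<le> 1" "(a + b) / 2 = y"
    then have "\<not> disk_alpha (f ` rect {a..b}) \<ge> N * (b - a)" using N0 by blast
    then show "disk_alpha (f ` rect {a..b}) < N * (b - a)" by simp
  qed
  obtain B where B: "B > 0" "\<And>x. norm (\<pi> x) \<le> B * norm x" using linear_bounded_pos[OF assms(6)] by blast
  define C where "C = 8 * K\<^sup>2 * (\<bar>N\<bar> + 1) / pi"
  have Cpos: "C > 0" using K by (simp add: C_def)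
  show ?thesis unfolding abs_cont_on_def
  proof (intro allI impI)
    fix \<epsilon> :: real assume ep: "\<epsilon> > 0"
    define \<delta> where "\<delta> = (\<epsilon> / B)\<^sup>2 / C"
    have dpos: "\<delta> > 0" using ep B Cpos by (simp add: \<delta>_def)
    show "\<exists>\<delta>>0. \<forall>(n::nat) (u::nat\<Rightarrow>real) v. (\<forall>i<n. 0 \<le> u i \<and> u i \<le> v i \<and> v i \<le> 1) \<and>
             (\<forall>i<n. \<forall>j<n. i \<noteq> j \<longrightarrow> v i \<le> u j \<or> v j \<le> u i) \<and> (\<Sum>i<n. v i - u i) < \<delta> \<longrightarrow>
             (\<Sum>i<n. \<bar>\<pi> (the (h (Some (Complex (v i) y)))) - \<pi> (the (h (Some (Complex (u i) y))))\<bar>) < \<epsilon>"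
    proof -
     have main: "(\<Sum>i<n. \<bar>\<pi> (the (h (Some (Complex (v i) y)))) - \<pi> (the (h (Some (Complex (u i) y))))\<bar>) < \<epsilon>"
       if a: "(\<forall>i<n. 0 \<le> u i \<and> u i \<le> v i \<and> v i \<le> 1) \<and>
             (\<forall>i<n. \<forall>j<n. i \<noteq> j \<longrightarrow> v i \<le> u j \<or> v j \<le> u i) \<and> (\<Sum>i<n. v i - u i) < \<delta>"
       for n :: nat and u v :: "nat \<Rightarrow> real"
     proof -
      define S where "S = (\<Sum>i<n. cmod (f (Complex (v i) y) - f (Complex (u i) y)))"
      have Snn: "S \<ge> 0" unfolding S_def by (intro sum_nonneg) auto
      have "S\<^sup>2 \<le> C * (\<Sum>i<n. v i - u i)"
        unfolding S_def C_def using a by (intro main_est[OF K QS injf surjf assms(3,4) N]) auto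
      also have "\<dots> < C * \<delta>" using a Cpos by (intro mult_strict_left_mono) auto
      also have "\<dots> = (\<epsilon> / B)\<^sup>2" unfolding \<delta>_def using Cpos by (metis less_irrefl times_divide_eq_right nonzero_mult_div_cancel_left)
      finally have S2: "S\<^sup>2 < (\<epsilon> / B)\<^sup>2" .
      have "0 \<le> \<epsilon> / B" using ep B by simp
      with S2 have "S < \<epsilon> / B" by (rule power2_less_imp_less)
      then have BS: "B * S < \<epsilon>" using B by (simp add: field_simps)
      have "(\<Sum>i<n. \<bar>\<pi> (the (h (Some (Complex (v i) y)))) - \<pi> (the (h (Some (Complex (u i) y))))\<bar>)
          = (\<Sum>i<n. norm (\<pi> (f (Complex (v i) y) - f (Complex (u i) y))))"
        unfolding f_def by (simp add: linear_diff[OF assms(6)])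
      also have "\<dots> \<le> (\<Sum>i<n. B * cmod (f (Complex (v i) y) - f (Complex (u i) y)))"
        by (intro sum_mono B(2))
      also have "\<dots> = B * S" by (simp add: S_def sum_distrib_left)
      finally show ?thesis
        using BS by linarith
     qed
     show ?thesis by (intro exI[of _ \<delta>] conjI dpos allI impI main) blast+
    qed
  qed
qed

end
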